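(* For every tree $T$ on $n$ vertices, $\operatorname{diam}(\mathcal{C}_3(T))\ge\lfloor 3n/2\rfloor$.
   Context: A proper 3-coloring of a tree $T=(V,E)$ is a map $f\colon V\to\mathbb{Z}/3\mathbb{Z}$ with $f(u)\neq f(v)$ for every edge $uv\in E$. The 3-coloring graph $\mathcal{C}_3(T)$ has the proper 3-colorings as vertices, two colorings adjacent iff they differ at exactly one vertex; $\operatorname{diam}$ denotes graph diameter. *)

theory Defs
  imports Main "HOL-Library.FuncSet" "HOL-Library.Extended_Nat"
begin

definition adj :: "'a set set \<Rightarrow> 'a \<Rightarrow> 'a \<Rightarrow> bool" where
  "adj E u v \<longleftrightarrow> u \<noteq> v \<and> {u, v} \<in> E"

definition simple_graph :: "'a set \<Rightarrow> 'a set set \<Rightarrow> bool" where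
  "simple_graph V E \<longleftrightarrow> finite V \<and> (\<forall>e\<in>E. \<exists>u v. u \<in> V \<and> v \<in> V \<and> u \<noteq> v \<and> e = {u, v})"

definition connected_graph :: "'a set \<Rightarrow> 'a set set \<Rightarrow> bool" where
  "connected_graph V E \<longleftrightarrow> (\<forall>u\<in>V. \<forall>v\<in>V. (u, v) \<in> {(x, y). adj E x y}\<^sup>*)"

definition is_cycle :: "'a set \<Rightarrow> 'a set set \<Rightarrow> 'a list \<Rightarrow> bool" where
  "is_cycle V E cs \<longleftrightarrow> length cs \<ge> 3 \<and> distinct cs \<and> set cs \<subseteq> V \<and>
     (\<forall>i < length cs. adj E (cs ! i) (cs ! ((i + 1) mod length cs)))"

definition acyclic_graph :: "'a set \<Rightarrow> 'a set set \<Rightarrow> bool" where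
  "acyclic_graph V E \<longleftrightarrow> (\<nexists>cs. is_cycle V E cs)"

definition tree :: "'a set \<Rightarrow> 'a set set \<Rightarrow> bool" where
  "tree V E \<longleftrightarrow> simple_graph V E \<and> V \<noteq> {} \<and> connected_graph V E \<and> acyclic_graph V E"

text \<open>Proper 3-colourings, colours Z/3Z represented by {0,1,2}; maps are extensional on V.\<close>
definition colorings3 :: "'a set \<Rightarrow> 'a set set \<Rightarrow> ('a \<Rightarrow> nat) set" where
  "colorings3 V E = {f \<in> V \<rightarrow>\<^sub>E {0, 1, 2}. \<forall>u\<in>V. \<forall>v\<in>V. adj E u v \<longrightarrow> f u \<noteq> f v}"

definition col_adj :: "'a set \<Rightarrow> ('a \<Rightarrow> nat) \<Rightarrow> ('a \<Rightarrow> nat) \<Rightarrow> bool" where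
  "col_adj V f g \<longleftrightarrow> card {v \<in> V. f v \<noteq> g v} = 1"

definition col_walk :: "'a set \<Rightarrow> 'a set set \<Rightarrow> nat \<Rightarrow> ('a \<Rightarrow> nat) \<Rightarrow> ('a \<Rightarrow> nat) \<Rightarrow> bool" where
  "col_walk V E k f g \<longleftrightarrow> (\<exists>ps. length ps = Suc k \<and> hd ps = f \<and> last ps = g \<and>
     set ps \<subseteq> colorings3 V E \<and> (\<forall>i < k. col_adj V (ps ! i) (ps ! Suc i)))"

text \<open>Graph distance (infinite if not connected) and diameter of the colouring graph.\<close>
definition col_dist :: "'a set \<Rightarrow> 'a set set \<Rightarrow> ('a \<Rightarrow> nat) \<Rightarrow> ('a \<Rightarrow> nat) \<Rightarrow> enat" where
  "col_dist V E f g = (INF k \<in> {k. col_walk V E k f g}. enat k)"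

definition col_diam :: "'a set \<Rightarrow> 'a set set \<Rightarrow> enat" where
  "col_diam V E = (SUP f \<in> colorings3 V E. SUP g \<in> colorings3 V E. col_dist V E f g)"

end

theory Submission
  imports Defs
begin

lemma pick: "\<exists>c::nat. c < 3 \<and> c \<noteq> a \<and> (c + w) mod 3 \<noteq> b"
proof -
  have m: "(c + w) mod 3 = (c + w mod 3) mod 3" for c by (simp add: mod_simps)
  have "w mod 3 < 3" by simp
  hence "w mod 3 = 0 \<or> w mod 3 = 1 \<or> w mod 3 = 2" by linarith
  hence "(0 \<noteq> a \<and> (0 + w) mod 3 \<noteq> b) \<or> (1 \<noteq> a \<and> (1 + w) mod 3 \<noteq> b) \<or> (2 \<noteq> a \<and> (2 + w) mod 3 \<noteq> b)"
    unfolding m by (elim disjE) auto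
  thus ?thesis
  proof (elim disjE)
    assume "0 \<noteq> a \<and> (0 + w) mod 3 \<noteq> b" thus ?thesis by (intro exI[of _ 0]) simp
  next
    assume "1 \<noteq> a \<and> (1 + w) mod 3 \<noteq> b" thus ?thesis by (intro exI[of _ 1]) simp
  next
    assume "2 \<noteq> a \<and> (2 + w) mod 3 \<noteq> b" thus ?thesis by (intro exI[of _ 2]) simp
  qed
qed


lemma adj_sym: "adj E u v = adj E v u"
  unfolding adj_def by (auto simp: insert_commute)

definition ppath :: "'a set set \<Rightarrow> 'a set \<Rightarrow> 'a list \<Rightarrow> bool" where
  "ppath E V xs \<longleftrightarrow> xs \<noteq> [] \<and> distinct xs \<and> set xs \<subseteq> V \<and>
     (\<forall>i. Suc i < length xs \<longrightarrow> adj E (xs!i) (xs!Suc i))"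

lemma adj_in_V:
  assumes "simple_graph V E" "adj E u v" shows "u \<in> V" "v \<in> V"
  using assms unfolding simple_graph_def adj_def by (auto simp: doubleton_eq_iff)

lemma low_degree:
  assumes sg: "simple_graph V E" and ac: "acyclic_graph V E" and ne: "V \<noteq> {}"
  shows "\<exists>l\<in>V. \<forall>y z. adj E l y \<longrightarrow> adj E l z \<longrightarrow> y = z"
proof -
  have fin: "finite V" using sg unfolding simple_graph_def by simp
  let ?P = "{xs. ppath E V xs}"
  have sub: "?P \<subseteq> {xs. set xs \<subseteq> V \<and> length xs \<le> card V}"
  proof
    fix xs assume "xs \<in> ?P"
    hence d: "distinct xs" and sV: "set xs \<subseteq> V" unfolding ppath_def by auto
    have "length xs = card (set xs)" using distinct_card[OF d] by simp
    also have "\<dots> \<le> card V" using card_mono[OF fin sV] .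
    finally show "xs \<in> {xs. set xs \<subseteq> V \<and> length xs \<le> card V}" using sV by simp
  qed
  have finP: "finite ?P" using finite_subset[OF sub finite_lists_length_le[OF fin]] .
  obtain v where v: "v \<in> V" using ne by blast
  have "[v] \<in> ?P" using v by (simp add: ppath_def)
  hence neP: "length ` ?P \<noteq> {}" by (metis empty_iff imageI)
  define L where "L = Max (length ` ?P)"
  have "L \<in> length ` ?P" unfolding L_def using Max_in finP neP by blast
  then obtain xs where xs: "ppath E V xs" "length xs = L" by blast
  have maxL: "\<And>ys. ppath E V ys \<Longrightarrow> length ys \<le> L"
    unfolding L_def using finP by (simp add: Max_ge)
  have nb: "y = xs ! 1 \<and> 1 < length xs" if ay: "adj E (xs!0) y" for y
  proof -
    have yV: "y \<in> V" using adj_in_V[OF sg ay] by simp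
    have "y \<in> set xs"
    proof (rule ccontr)
      assume "y \<notin> set xs"
      hence "ppath E V (y # xs)" using xs(1) yV ay adj_sym[of E]
        unfolding ppath_def by (auto simp: nth_Cons split: nat.splits)
      thus False using maxL xs(2) by fastforce
    qed
    then obtain j where j: "j < length xs" "y = xs ! j" by (auto simp: in_set_conv_nth)
    have "j \<noteq> 0"
    proof
      assume "j = 0" thus False using ay j unfolding adj_def by simp
    qed
    moreover have "\<not> j \<ge> 2"
    proof
      assume j2: "j \<ge> 2"
      define cs where "cs = take (Suc j) xs"
      have lc: "length cs = Suc j" using j unfolding cs_def by simp
      have "is_cycle V E cs"
        unfolding is_cycle_def
      proof (intro conjI allI impI)
        show "3 \<le> length cs" using lc j2 by simp
        show "distinct cs" using xs(1) unfolding cs_def ppath_def by simp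
        show "set cs \<subseteq> V" using xs(1) unfolding cs_def ppath_def by (meson order_trans set_take_subset)
        fix i assume i: "i < length cs"
        show "adj E (cs ! i) (cs ! ((i + 1) mod length cs))"
        proof (cases "i < j")
          case True
          hence "(i+1) mod length cs = Suc i" using lc by simp
          thus ?thesis using True xs(1) j unfolding cs_def ppath_def by simp
        next
          case False
          hence "i = j" using i lc by simp
          thus ?thesis using lc ay j adj_sym[of E] unfolding cs_def by simp
        qed
      qed
      thus False using ac unfolding acyclic_graph_def by blast
    qed
    ultimately have "j = 1" by simp
    thus ?thesis using j by simp
  qed
  have "xs ! 0 \<in> V" using xs(1) unfolding ppath_def by (simp add: subset_iff)
  moreover have "\<forall>y z. adj E (xs!0) y \<longrightarrow> adj E (xs!0) z \<longrightarrow> y = z" using nb by metis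
  ultimately show ?thesis by blast
qed

lemma exists_col:
  assumes "simple_graph V E" "acyclic_graph V E"
  shows "\<exists>f g. f \<in> colorings3 V E \<and> g \<in> colorings3 V E \<and> (\<forall>v\<in>V. g v = (f v + w0 v) mod 3)"
  using assms
proof (induction "card V" arbitrary: V E)
  case 0
  have "finite V" using 0(2) unfolding simple_graph_def by simp
  hence "V = {}" using 0 by simp
  thus ?case unfolding colorings3_def by auto
next
  case (Suc m)
  have fin: "finite V" using Suc(3) unfolding simple_graph_def by simp
  have ne: "V \<noteq> {}" using Suc by auto
  obtain l where l: "l \<in> V" and deg: "\<forall>y z. adj E l y \<longrightarrow> adj E l z \<longrightarrow> y = z"
    using low_degree[OF Suc(3) Suc(4) ne] by blast
  define V' where "V' = V - {l}"
  define E' where "E' = {e\<in>E. l \<notin> e}"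
  have adjE': "adj E' u v \<longleftrightarrow> adj E u v \<and> u \<noteq> l \<and> v \<noteq> l" for u v
    unfolding adj_def E'_def by auto
  have sg': "simple_graph V' E'" using Suc(3) unfolding simple_graph_def V'_def E'_def by fastforce
  have ac': "acyclic_graph V' E'"
    using Suc(4) unfolding acyclic_graph_def is_cycle_def V'_def adjE' by blast
  have cV': "m = card V'" using Suc(2) l fin unfolding V'_def by simp
  obtain f' g' where f': "f' \<in> colorings3 V' E'" and g': "g' \<in> colorings3 V' E'"
    and fg': "\<forall>v\<in>V'. g' v = (f' v + w0 v) mod 3"
    using Suc(1)[OF cV' sg' ac'] by blast
  obtain c :: nat where c: "c < 3" and cp: "\<forall>p. adj E l p \<longrightarrow> c \<noteq> f' p \<and> (c + w0 l) mod 3 \<noteq> g' p"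
  proof (cases "\<exists>p. adj E l p")
    case True
    then obtain p where p: "adj E l p" by blast
    have "\<exists>c::nat. c < 3 \<and> c \<noteq> f' p \<and> (c + w0 l) mod 3 \<noteq> g' p" by (rule pick)
    then obtain c where "c < 3" "c \<noteq> f' p" "(c + w0 l) mod 3 \<noteq> g' p" by blast
    thus ?thesis using that p deg by metis
  next
    case False
    thus ?thesis using that[of 0] by auto
  qed
  define f where "f = f'(l := c)"
  define g where "g = g'(l := (c + w0 l) mod 3)"
  have lV': "l \<notin> V'" unfolding V'_def by simp
  have VV: "V = insert l V'" using l unfolding V'_def by blast
  have f'e: "f' \<in> V' \<rightarrow>\<^sub>E {0,1,2}" and g'e: "g' \<in> V' \<rightarrow>\<^sub>E {0,1,2}"
    using f' g' unfolding colorings3_def by auto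
  have fe: "f \<in> V \<rightarrow>\<^sub>E {0,1,2}" using f'e c lV' unfolding f_def VV PiE_def extensional_def
    by auto
  have ge: "g \<in> V \<rightarrow>\<^sub>E {0,1,2}" using g'e lV' unfolding g_def VV PiE_def extensional_def
    by auto
  have fp: "\<forall>u\<in>V. \<forall>v\<in>V. adj E u v \<longrightarrow> f u \<noteq> f v"
  proof (intro ballI impI)
    fix u v assume u: "u \<in> V" and v: "v \<in> V" and a: "adj E u v"
    have "u \<noteq> v" using a adj_def by metis
    show "f u \<noteq> f v"
    proof (cases "u = l \<or> v = l")
      case True
      thus ?thesis using cp a adj_sym[of E] \<open>u \<noteq> v\<close> unfolding f_def by auto
    next
      case False
      thus ?thesis using f' u v a adjE' unfolding colorings3_def f_def V'_def by auto
    qed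
  qed
  have gp: "\<forall>u\<in>V. \<forall>v\<in>V. adj E u v \<longrightarrow> g u \<noteq> g v"
  proof (intro ballI impI)
    fix u v assume u: "u \<in> V" and v: "v \<in> V" and a: "adj E u v"
    have "u \<noteq> v" using a adj_def by metis
    show "g u \<noteq> g v"
    proof (cases "u = l \<or> v = l")
      case True
      thus ?thesis using cp a adj_sym[of E] \<open>u \<noteq> v\<close> unfolding g_def by (metis fun_upd_apply)
    next
      case False
      thus ?thesis using g' u v a adjE' unfolding colorings3_def g_def V'_def by auto
    qed
  qed
  have "\<forall>v\<in>V. g v = (f v + w0 v) mod 3" using fg' unfolding f_def g_def V'_def by auto
  thus ?case using fe ge fp gp unfolding colorings3_def by blast
qed



definition dlt :: "nat \<Rightarrow> nat \<Rightarrow> int" where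
  "dlt a b = (if b = (a+1) mod 3 then 1 else if b = a then 0 else -1)"
definition sg :: "nat \<Rightarrow> nat \<Rightarrow> int" where
  "sg a b = (if a = (b+1) mod 3 then 1 else -1)"
definition WW :: "('a \<Rightarrow> nat) list \<Rightarrow> nat \<Rightarrow> 'a \<Rightarrow> int" where
  "WW ps t v = (\<Sum>i<t. dlt ((ps!i) v) ((ps!Suc i) v))"

lemma lt3: "(a::nat) < 3 \<longleftrightarrow> a = 0 \<or> a = 1 \<or> a = 2" by auto

lemma dlt_mod: assumes "a < 3" "b < 3" shows "int b mod 3 = (int a + dlt a b) mod 3"
proof -
  have "a = 0 \<or> a = 1 \<or> a = 2" "b = 0 \<or> b = 1 \<or> b = 2" using assms by auto
  thus ?thesis unfolding dlt_def by (elim disjE; simp)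
qed

lemma nsucc: "(a+1) mod 3 \<noteq> (a::nat)"
proof
  assume h: "(a+1) mod 3 = a"
  hence "a < 3" by (metis mod_less_divisor zero_less_numeral)
  hence "a = 0 \<or> a = 1 \<or> a = 2" by linarith
  thus False using h by (elim disjE) simp_all
qed

lemma dlt_same: "dlt a a = 0" unfolding dlt_def using nsucc[of a] by auto

lemma edge_step: assumes "a < 3" "a' < 3" "b < 3" "a \<noteq> b" "a' \<noteq> b"
  shows "sg a' b = sg a b - 2 * dlt a a'"
proof -
  have "a = 0 \<or> a = 1 \<or> a = 2" "a' = 0 \<or> a' = 1 \<or> a' = 2" "b = 0 \<or> b = 1 \<or> b = 2" using assms by auto
  thus ?thesis using assms(4,5) unfolding dlt_def sg_def by (elim disjE; simp)
qed

lemma edge_step2: assumes "a < 3" "b' < 3" "b < 3" "a \<noteq> b" "a \<noteq> b'"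
  shows "sg a b' = sg a b + 2 * dlt b b'"
proof -
  have "a = 0 \<or> a = 1 \<or> a = 2" "b' = 0 \<or> b' = 1 \<or> b' = 2" "b = 0 \<or> b = 1 \<or> b = 2" using assms by auto
  thus ?thesis using assms(4,5) unfolding dlt_def sg_def by (elim disjE; simp)
qed

lemma abs_dlt: "\<bar>dlt a b\<bar> = (if a = b then 0 else 1)"
  unfolding dlt_def using nsucc[of a] by auto

lemma key_mod:
  assumes "fu < 3" "fv < 3" "fu \<noteq> fv" "gu \<noteq> gv" "gu = (fu + a) mod 3" "gv = (fv + b) mod 3"
    "a \<in> {1,2}" "b \<in> {1,2}" "sg gu gv = sg fu fv - 2 * X"
  shows "X = int a - int b"
proof -
  have X: "2 * X = sg fu fv - sg gu gv" using assms(9) by simp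
  have "fu = 0 \<or> fu = 1 \<or> fu = 2" "fv = 0 \<or> fv = 1 \<or> fv = 2" using assms(1,2) by linarith+
  moreover have "a = 1 \<or> a = 2" "b = 1 \<or> b = 2" using assms(7,8) by simp_all
  ultimately show ?thesis using X assms(3,4) unfolding assms(5,6)
    by (elim disjE) (simp_all add: sg_def)
qed

lemma col_vals: "f \<in> colorings3 V E \<Longrightarrow> v \<in> V \<Longrightarrow> f v < 3"
  unfolding colorings3_def using PiE_mem by fastforce

lemma col_inv:
  assumes A1: "\<forall>i\<le>k. ps!i \<in> colorings3 V E" and v: "v \<in> V"
  shows "t \<le> k \<Longrightarrow> int ((ps!t) v) mod 3 = (int ((ps!0) v) + WW ps t v) mod 3"
proof (induction t)
  case 0
  then show ?case by (simp add: WW_def)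
next
  case (Suc t)
  have "int ((ps!Suc t) v) mod 3 = (int ((ps!t) v) + dlt ((ps!t) v) ((ps!Suc t) v)) mod 3"
  proof (rule dlt_mod)
    show "(ps!t) v < 3" using col_vals[of "ps!t" V E v] A1 v Suc.prems by simp
    show "(ps!Suc t) v < 3" using col_vals[of "ps!Suc t" V E v] A1 v Suc.prems by simp
  qed
  also have "\<dots> = (int ((ps!t) v) mod 3 + dlt ((ps!t) v) ((ps!Suc t) v)) mod 3" by (simp add: mod_simps)
  also have "\<dots> = ((int ((ps!0) v) + WW ps t v) mod 3 + dlt ((ps!t) v) ((ps!Suc t) v)) mod 3"
    using Suc by simp
  also have "\<dots> = (int ((ps!0) v) + WW ps (Suc t) v) mod 3" by (simp add: WW_def mod_simps add.assoc)
  finally show ?case .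
qed

lemma edge_inv:
  assumes A1: "\<forall>i\<le>k. ps!i \<in> colorings3 V E" and A2: "\<forall>i<k. col_adj V (ps!i) (ps!Suc i)"
    and u: "u \<in> V" and v: "v \<in> V" and a: "adj E u v" and fin: "finite V"
  shows "t \<le> k \<Longrightarrow> sg ((ps!t) u) ((ps!t) v) = sg ((ps!0) u) ((ps!0) v) - 2 * (WW ps t u - WW ps t v)"
proof (induction t)
  case 0
  then show ?case by (simp add: WW_def)
next
  case (Suc t)
  have tk: "t < k" using Suc by simp
  have uv: "u \<noteq> v" using a adj_def by metis
  have c1: "ps!t \<in> colorings3 V E" "ps!Suc t \<in> colorings3 V E" using A1 tk by auto
  have pr: "(ps!t) u \<noteq> (ps!t) v" "(ps!Suc t) u \<noteq> (ps!Suc t) v"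
    using c1 u v a unfolding colorings3_def by auto
  have lt: "(ps!t) u < 3" "(ps!t) v < 3" "(ps!Suc t) u < 3" "(ps!Suc t) v < 3"
    using c1 u v col_vals by metis+
  have card1: "card {x\<in>V. (ps!t) x \<noteq> (ps!Suc t) x} = 1" using A2 tk col_adj_def by metis
  have notboth: "(ps!t) u = (ps!Suc t) u \<or> (ps!t) v = (ps!Suc t) v"
  proof (rule ccontr)
    assume "\<not> ?thesis"
    hence "{u,v} \<subseteq> {x\<in>V. (ps!t) x \<noteq> (ps!Suc t) x}" using u v by auto
    hence "card {u,v} \<le> 1" using card1 card_mono fin
      by (metis (no_types, lifting) finite_subset mem_Collect_eq subsetI)
    thus False using uv by simp
  qed
  have step: "sg ((ps!Suc t) u) ((ps!Suc t) v) = sg ((ps!t) u) ((ps!t) v)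
      - 2 * (dlt ((ps!t) u) ((ps!Suc t) u) - dlt ((ps!t) v) ((ps!Suc t) v))"
  proof (cases "(ps!t) v = (ps!Suc t) v")
    case True
    thus ?thesis using edge_step[of "(ps!t) u" "(ps!Suc t) u" "(ps!t) v"] lt pr by (simp add: dlt_same)
  next
    case False
    hence "(ps!t) u = (ps!Suc t) u" using notboth by simp
    thus ?thesis using edge_step2[of "(ps!t) u" "(ps!Suc t) v" "(ps!t) v"] lt pr by (simp add: dlt_same)
  qed
  have w1: "WW ps (Suc t) u = WW ps t u + dlt ((ps!t) u) ((ps!Suc t) u)" by (simp add: WW_def)
  have w2: "WW ps (Suc t) v = WW ps t v + dlt ((ps!t) v) ((ps!Suc t) v)" by (simp add: WW_def)
  have IH: "sg ((ps!t) u) ((ps!t) v) = sg ((ps!0) u) ((ps!0) v) - 2 * (WW ps t u - WW ps t v)"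
    using Suc.IH tk by simp
  show ?case unfolding w1 w2 step IH by (simp add: algebra_simps)
qed

lemma count_bound:
  assumes A2: "\<forall>i<k. col_adj V (ps!i) (ps!Suc i)" and fin: "finite V"
  shows "(\<Sum>v\<in>V. \<bar>WW ps k v\<bar>) \<le> int k"
proof -
  have "(\<Sum>v\<in>V. \<bar>WW ps k v\<bar>) \<le> (\<Sum>v\<in>V. \<Sum>i<k. \<bar>dlt ((ps!i) v) ((ps!Suc i) v)\<bar>)"
  proof (rule sum_mono)
    fix v assume "v \<in> V"
    show "\<bar>WW ps k v\<bar> \<le> (\<Sum>i<k. \<bar>dlt ((ps!i) v) ((ps!Suc i) v)\<bar>)"
      unfolding WW_def by (rule sum_abs)
  qed
  also have "\<dots> = (\<Sum>i<k. \<Sum>v\<in>V. \<bar>dlt ((ps!i) v) ((ps!Suc i) v)\<bar>)" by (rule sum.swap)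
  also have "\<dots> = (\<Sum>i<k. (1::int))"
  proof (rule sum.cong[OF refl])
    fix i assume "i \<in> {..<k}"
    hence "i < k" by simp
    hence "card {x\<in>V. (ps!i) x \<noteq> (ps!Suc i) x} = 1" using A2 unfolding col_adj_def by blast
    moreover have "(\<Sum>v\<in>V. \<bar>dlt ((ps!i) v) ((ps!Suc i) v)\<bar>) = int (card {x\<in>V. (ps!i) x \<noteq> (ps!Suc i) x})"
    proof -
      have e: "V \<inter> - {v. (ps!i) v = (ps!Suc i) v} = {x\<in>V. (ps!i) x \<noteq> (ps!Suc i) x}" by auto
      show ?thesis unfolding abs_dlt using fin by (simp add: sum.If_cases e)
    qed
    ultimately show "(\<Sum>v\<in>V. \<bar>dlt ((ps!i) v) ((ps!Suc i) v)\<bar>) = 1" by simp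
  qed
  finally show ?thesis by simp
qed



lemma h1: "(3*n) div 2 = n + (n::nat) div 2" by presburger
lemma absA: "(j::int) \<noteq> 0 \<Longrightarrow> \<bar>1 + 3*j\<bar> \<ge> 2" by (cases "j > 0") auto
lemma absB: "(j::int) \<noteq> 0 \<Longrightarrow> \<bar>2 + 3*j\<bar> \<ge> 1" by (cases "j > 0") auto

lemma arith_final:
  fixes s t :: nat and j :: int
  assumes "s \<le> t" "n = s + t" "s = n div 2"
  shows "int ((3 * n) div 2) \<le> int s * \<bar>1 + 3*j\<bar> + int t * \<bar>2 + 3*j\<bar>"
proof -
  have h: "int ((3*n) div 2) = int s * 2 + int t" unfolding h1 using assms(2,3) by simp
  show ?thesis
  proof (cases "j = 0")
    case True
    thus ?thesis using h assms(1) by simp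
  next
    case False
    have "int s * 2 \<le> int s * \<bar>1 + 3*j\<bar>" using absA[OF False] by (intro mult_left_mono) auto
    moreover have "int t * 1 \<le> int t * \<bar>2 + 3*j\<bar>" using absB[OF False] by (intro mult_left_mono) auto
    ultimately show ?thesis using h by simp
  qed
qed

theorem mainTheorem11:
  fixes V :: "'a set" and E :: "'a set set" and n :: nat
  assumes "tree V E" and "card V = n"
  shows "enat ((3 * n) div 2) \<le> col_diam V E"
proof -
  have sg: "simple_graph V E" and ne: "V \<noteq> {}" and cn: "connected_graph V E"
    and ac: "acyclic_graph V E" using assms(1) unfolding tree_def by auto
  have fin: "finite V" using sg unfolding simple_graph_def by simp
  obtain r where r: "r \<in> V" using ne by blast
  have "n div 2 \<le> card V" using assms(2) by simp
  then obtain S where S: "S \<subseteq> V" "card S = n div 2" "finite S"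
    by (rule obtain_subset_with_card_n)
  define w0 :: "'a \<Rightarrow> nat" where "w0 v = (if v \<in> S then 1 else 2)" for v
  obtain f g where f: "f \<in> colorings3 V E" and g: "g \<in> colorings3 V E"
    and fg: "\<forall>v\<in>V. g v = (f v + w0 v) mod 3"
    using exists_col[OF sg ac, of w0] by blast
  have walk: "int ((3 * n) div 2) \<le> int k" if cw: "col_walk V E k f g" for k
  proof -
    obtain ps where ps: "length ps = Suc k" "hd ps = f" "last ps = g"
      "set ps \<subseteq> colorings3 V E" and A2: "\<forall>i<k. col_adj V (ps ! i) (ps ! Suc i)"
      using cw unfolding col_walk_def by blast
    have A1: "\<forall>i\<le>k. ps!i \<in> colorings3 V E" using ps(1,4) nth_mem by (metis le_imp_less_Suc subsetD)
    have p0: "ps!0 = f" using ps(1,2) by (metis hd_conv_nth list.size(3) nat.distinct(1))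
    have pk: "ps!k = g" using ps(1,3) by (metis diff_Suc_1 last_conv_nth list.size(3) nat.distinct(1))
    define W where "W = WW ps k"
    have edge: "W u - W v = int (w0 u) - int (w0 v)" if u: "u \<in> V" and v: "v \<in> V"
      and a: "adj E u v" for u v
    proof -
      have e: "sg (g u) (g v) = sg (f u) (f v) - 2 * (W u - W v)"
        using edge_inv[OF A1 A2 u v a fin, of k] p0 pk unfolding W_def by simp
      show ?thesis
      proof (rule key_mod[OF _ _ _ _ _ _ _ _ e])
        show "f u < 3" using col_vals[OF f u] .
        show "f v < 3" using col_vals[OF f v] .
        show "f u \<noteq> f v" using f u v a unfolding colorings3_def by auto
        show "g u \<noteq> g v" using g u v a unfolding colorings3_def by auto
        show "g u = (f u + w0 u) mod 3" "g v = (f v + w0 v) mod 3" using fg u v by auto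
        show "w0 u \<in> {1,2}" "w0 v \<in> {1,2}" unfolding w0_def by auto
      qed
    qed
    have const: "W v - int (w0 v) = W r - int (w0 r)" if v: "v \<in> V" for v
    proof -
      have "(r, v) \<in> {(x, y). adj E x y}\<^sup>*" using cn r v unfolding connected_graph_def by blast
      thus ?thesis
      proof (induction rule: rtrancl_induct)
        case base
        then show ?case by simp
      next
        case (step y z)
        hence a: "adj E y z" by simp
        show ?case using edge[OF adj_in_V[OF sg a] a] step.IH by simp
      qed
    qed
    have cm: "int (g r) mod 3 = (int (f r) + W r) mod 3"
      using col_inv[OF A1 r, of k] p0 pk unfolding W_def by simp
    have "int (g r) = (int (f r) + int (w0 r)) mod 3" using fg r by (simp add: zmod_int)
    hence "(int (f r) + W r) mod 3 = (int (f r) + int (w0 r)) mod 3" using cm by simp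
    hence "3 dvd ((int (f r) + W r) - (int (f r) + int (w0 r)))" by (simp only: mod_eq_dvd_iff)
    hence "3 dvd (W r - int (w0 r))" by simp
    then obtain j where j: "W r - int (w0 r) = 3 * j" by (elim dvdE)
    have Wv: "W v = int (w0 v) + 3 * j" if "v \<in> V" for v using const[OF that] j by simp
    have "(\<Sum>v\<in>V. \<bar>W v\<bar>) = (\<Sum>v\<in>V - S. \<bar>W v\<bar>) + (\<Sum>v\<in>S. \<bar>W v\<bar>)"
      using sum.subset_diff[OF S(1) fin] by simp
    also have "(\<Sum>v\<in>S. \<bar>W v\<bar>) = (\<Sum>v\<in>S. \<bar>1 + 3*j\<bar>)"
      using Wv S(1) unfolding w0_def by (intro sum.cong) auto
    also have "(\<Sum>v\<in>V - S. \<bar>W v\<bar>) = (\<Sum>v\<in>V - S. \<bar>2 + 3*j\<bar>)"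
      using Wv unfolding w0_def by (intro sum.cong) auto
    finally have sumeq: "(\<Sum>v\<in>V. \<bar>W v\<bar>) = int (card S) * \<bar>1 + 3*j\<bar> + int (card (V - S)) * \<bar>2 + 3*j\<bar>"
      by simp
    have cVS: "card (V - S) = n - n div 2" using card_Diff_subset[OF S(3) S(1)] assms(2) S(2) by simp
    have "int ((3 * n) div 2) \<le> (\<Sum>v\<in>V. \<bar>W v\<bar>)"
      unfolding sumeq cVS S(2)
    proof (rule arith_final)
      show "n div 2 \<le> n - n div 2" by presburger
      show "n = n div 2 + (n - n div 2)" by presburger
    qed (rule refl)
    also have "\<dots> \<le> int k" using count_bound[OF A2 fin] unfolding W_def .
    finally show ?thesis .
  qed
  have "enat ((3 * n) div 2) \<le> col_dist V E f g"
    unfolding col_dist_def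
  proof (rule INF_greatest)
    fix k assume "k \<in> {k. col_walk V E k f g}"
    hence "int ((3 * n) div 2) \<le> int k" using walk by simp
    thus "enat ((3 * n) div 2) \<le> enat k" by simp
  qed
  also have "col_dist V E f g \<le> (SUP g'\<in>colorings3 V E. col_dist V E f g')"
    by (rule SUP_upper[OF g])
  also have "\<dots> \<le> col_diam V E"
    unfolding col_diam_def by (rule SUP_upper[OF f])
  finally show ?thesis .
qed

end
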